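(* Let $k$ be a positive integer with $\mathcal A_k\neq\varnothing$. Then the sequence of iterates $z(k),z^2(k),z^3(k),\dots$ takes only finitely many values (it eventually reaches a fixed point of $z$), and \[c(k)=k\cdot\operatorname{lcm}\{z^i(k)\}_{i=1}^{\infty}.\]
   Context: $F_n$ is the $n$-th Fibonacci number ($F_0=0,F_1=1$). For a positive integer $n$, $z(n)$ is the least positive integer $m$ with $n\mid F_m$, and $z^i$ denotes the $i$-th iterate of $z$. For a positive integer $k$, $\mathcal A_k:=\{n\in\mathbb N:\ z(n)\mid n \text{ and } n/z(n)=k\}$, and $c(k):=\min\mathcal A_k$. *)

theory Defs
  imports "HOL-Number_Theory.Fib"
begin

definition zfib :: "nat \<Rightarrow> nat" where
  "zfib n = (LEAST m. 0 < m \<and> n dvd fib m)"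

definition A_set :: "nat \<Rightarrow> nat set" where
  "A_set k = {n. 0 < n \<and> zfib n dvd n \<and> n div zfib n = k}"

definition c_min :: "nat \<Rightarrow> nat" where
  "c_min k = (LEAST n. n \<in> A_set k)"

end

theory Submission
  imports Defs "HOL-Number_Theory.Number_Theory"
begin

datatype zs = ZS int int

fun s1 :: "zs \<Rightarrow> int" where "s1 (ZS a b) = a"
fun s2 :: "zs \<Rightarrow> int" where "s2 (ZS a b) = b"

lemma zs_eq0: "x = y \<longleftrightarrow> s1 x = s1 y \<and> s2 x = s2 y"
  by (cases x; cases y) auto

instantiation zs :: comm_ring_1
begin
definition "0 = ZS 0 0"
definition "1 = ZS 1 0"
definition "x + y = ZS (s1 x + s1 y) (s2 x + s2 y)"
definition "x - y = ZS (s1 x - s1 y) (s2 x - s2 y)"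
definition "- x = ZS (- s1 x) (- s2 x)"
definition "x * y = ZS (s1 x * s1 y + 5 * s2 x * s2 y) (s1 x * s2 y + s2 x * s1 y)"
instance
  apply standard
  by (simp_all add: zs_eq0 zero_zs_def one_zs_def plus_zs_def minus_zs_def uminus_zs_def times_zs_def algebra_simps)
end

lemma zs_eq: "x = y \<longleftrightarrow> s1 x = s1 y \<and> s2 x = s2 y"
  by (cases x; cases y) auto

lemma s_simps[simp]: "s1 0 = 0" "s2 0 = 0" "s1 1 = 1" "s2 1 = 0"
  "s1 (x+y) = s1 x + s1 y" "s2 (x+y) = s2 x + s2 y"
  "s1 (x*y) = s1 x * s1 y + 5 * s2 x * s2 y" "s2 (x*y) = s1 x * s2 y + s2 x * s1 y"
  by (simp_all add: zero_zs_def one_zs_def plus_zs_def times_zs_def)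

lemma s_of_nat[simp]: "s1 (of_nat n) = int n" "s2 (of_nat n) = 0"
  by (induct n) simp_all

lemma s_sum: "s1 (sum f A) = (\<Sum>x\<in>A. s1 (f x))" "s2 (sum f A) = (\<Sum>x\<in>A. s2 (f x))"
  by (induct A rule: infinite_finite_induct) simp_all

lemma sqrt_pow: "ZS 0 1 ^ k = (if even k then ZS (5 ^ (k div 2)) 0 else ZS 0 (5 ^ (k div 2)))"
  by (induct k) (auto simp: zs_eq)

abbreviation "ww \<equiv> ZS 1 1"

lemma ww_Suc: "s1 (ww ^ Suc n) = s1 (ww^n) + 5 * s2 (ww^n)" "s2 (ww ^ Suc n) = s1 (ww^n) + s2 (ww^n)"
  by (simp_all add: power_Suc2)

lemma ww_fib_aux: "2 * s2 (ww^n) = 2^n * int (fib n) \<and> 2 * s2 (ww^Suc n) = 2^Suc n * int (fib (Suc n))"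
proof (induct n)
  case 0 then show ?case by (simp add: zs_eq)
next
  case (Suc n)
  have r: "s2 (ww ^ Suc (Suc n)) = 2 * s2 (ww ^ Suc n) + 4 * s2 (ww^n)"
    by (simp add: ww_Suc)
  have f: "fib (Suc (Suc n)) = fib (Suc n) + fib n" by simp
  from Suc show ?case
    by (simp only: r f) (simp add: algebra_simps)
qed

lemma ww_fib: "2 * s2 (ww^n) = 2^n * int (fib n)"
  using ww_fib_aux by blast

lemma choose_sum_cong:
  fixes g :: "nat \<Rightarrow> int"
  assumes "prime q"
  shows "int q dvd (\<Sum>k\<le>q. int (q choose k) * g k) - (g 0 + g q)"
proof -
  have q0: "q > 0" using assms prime_gt_0_nat by blast
  have split: "{..q} = insert 0 (insert q {1..<q})" using q0 by auto
  have "(\<Sum>k\<le>q. int (q choose k) * g k) = g 0 + g q + (\<Sum>k\<in>{1..<q}. int (q choose k) * g k)"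
    using q0 by (simp add: split)
  moreover have "int q dvd (\<Sum>k\<in>{1..<q}. int (q choose k) * g k)"
  proof (rule dvd_sum)
    fix k assume "k \<in> {1..<q}"
    then have "q dvd (q choose k)" using dvd_choose_prime[of k q] assms by auto
    then show "int q dvd int (q choose k) * g k" by (simp add: int_dvd_int_iff)
  qed
  ultimately show ?thesis by (simp only: add_diff_cancel_left')
qed

lemma ww_binom: "ww ^ q = (\<Sum>k\<le>q. of_nat (q choose k) * ZS 0 1 ^ k)"
proof -
  have "ww = ZS 0 1 + 1" by (simp add: zs_eq)
  then show ?thesis by (simp add: binomial_ring)
qed

lemma ww_mod:
  assumes "prime q" "odd q"
  shows "int q dvd s1 (ww^q) - 1" "int q dvd s2 (ww^q) - 5 ^ (q div 2)"
proof -
  have s1e: "s1 (ww^q) = (\<Sum>k\<le>q. int (q choose k) * (if even k then 5 ^ (k div 2) else 0))"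
    by (subst ww_binom) (simp add: s_sum sqrt_pow if_distrib cong: if_cong)
  have s2e: "s2 (ww^q) = (\<Sum>k\<le>q. int (q choose k) * (if even k then 0 else 5 ^ (k div 2)))"
    by (subst ww_binom) (simp add: s_sum sqrt_pow if_distrib cong: if_cong)
  show "int q dvd s1 (ww^q) - 1"
    using choose_sum_cong[OF assms(1), of "\<lambda>k. if even k then 5 ^ (k div 2) else 0"] assms(2)
    by (simp add: s1e)
  show "int q dvd s2 (ww^q) - 5 ^ (q div 2)"
    using choose_sum_cong[OF assms(1), of "\<lambda>k. if even k then 0 else 5 ^ (k div 2)"] assms(2)
    by (simp add: s2e)
qed


lemma p5: "prime (5::nat)"
proof -
  have "{2..<5::nat} = {2,3,4}" by auto
  then show ?thesis unfolding prime_nat_iff' by simp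
qed

lemma prime_fib:
  assumes q: "prime q" "q \<noteq> 2" "q \<noteq> 5"
  shows "q dvd fib (q - 1) \<or> q dvd fib (q + 1)"
proof -
  have odd: "odd q" using q by (metis two_is_prime_nat primes_dvd_imp_eq)
  define h where "h = q div 2"
  have qh: "q = 2*h + 1" using odd h_def by presburger
  have pq: "prime (int q)" using q by simp
  define A where "A = s1 (ww^q)"
  define B where "B = s2 (ww^q)"
  have A1: "int q dvd A - 1" using ww_mod[OF q(1) odd] A_def by simp
  have B1: "int q dvd B - 5^h" using ww_mod[OF q(1) odd] B_def h_def by simp
  have e1: "2 * B = 2^q * int (fib q)" using ww_fib B_def by simp
  have e2: "2 * (A + B) = 2^(q+1) * int (fib (q+1))"
    using ww_fib[of "Suc q"] A_def B_def by (simp add: ww_Suc)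
  have nq2n: "\<not> q dvd 2"
    using q by (metis primes_dvd_imp_eq two_is_prime_nat)
  have nq2: "\<not> int q dvd 2"
    using nq2n by (metis of_nat_dvd_iff of_nat_numeral)
  have nq5: "\<not> q dvd 5"
    using q p5 primes_dvd_imp_eq by blast
  have f2: "[2 ^ (q - 1) = 1] (mod q)"
    using fermat_theorem[OF q(1), of 2] nq2n by blast
  then have "int q dvd 2^(q-1) - 1"
    by (metis cong_iff_dvd_diff cong_int_iff of_nat_1 of_nat_numeral of_nat_power)
  then have F2: "int q dvd 2^q - 2"
  proof -
    have eq: "(2::int)^q - 2 = 2 * (2^(q-1) - 1)" using qh by (simp add: algebra_simps)
    show ?thesis unfolding eq using \<open>int q dvd 2^(q-1) - 1\<close> by (rule dvd_mult)
  qed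
  have f5: "[5 ^ (q - 1) = 1] (mod q)"
    using fermat_theorem[OF q(1), of 5] nq5 by blast
  then have F5: "int q dvd 5^(2*h) - 1" using qh
    by (metis cong_iff_dvd_diff cong_int_iff of_nat_1 of_nat_numeral of_nat_power add_diff_cancel_right')
  have eq1: "2 * (int (fib q) - 5^h) = 2*(B - 5^h) - (2^q - 2) * int (fib q)"
    using e1 by (simp add: algebra_simps)
  have "int q dvd 2*(B - 5^h) - (2^q - 2) * int (fib q)"
    by (rule dvd_diff[OF dvd_mult[OF B1] dvd_mult2[OF F2]])
  then have "int q dvd 2 * (int (fib q) - 5^h)" by (simp only: eq1)
  then have c1: "int q dvd int (fib q) - 5^h" using pq nq2 prime_dvd_mult_iff by blast
  have eq2: "2 * (2 * int (fib (q+1)) - 1 - 5^h) = 2*(A - 1) + 2*(B - 5^h) - 2 * ((2^q - 2) * int (fib (q+1)))"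
    using e2 by (simp add: algebra_simps)
  have "int q dvd 2*(A - 1) + 2*(B - 5^h) - 2 * ((2^q - 2) * int (fib (q+1)))"
    by (rule dvd_diff[OF dvd_add[OF dvd_mult[OF A1] dvd_mult[OF B1]] dvd_mult[OF dvd_mult2[OF F2]]])
  then have "int q dvd 2 * (2 * int (fib (q+1)) - 1 - 5^h)" by (simp only: eq2)
  then have c2: "int q dvd 2 * int (fib (q+1)) - 1 - 5^h" using pq nq2 prime_dvd_mult_iff by blast
  have "(5::int)^(2*h) - 1 = (5^h - 1) * (5^h + 1)" by (simp add: algebra_simps power_mult power2_eq_square)
  then have "int q dvd 5^h - 1 \<or> int q dvd 5^h + 1" using F5 pq prime_dvd_mult_iff by metis
  then show ?thesis
  proof
    assume h1: "int q dvd 5^h - 1"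
    have "int q dvd int (fib q) - 1"
      using dvd_add[OF c1 h1] by simp
    moreover have "int q dvd 2 * (int (fib (q+1)) - 1)"
      using dvd_add[OF c2 h1] by (simp add: algebra_simps)
    then have "int q dvd int (fib (q+1)) - 1" using pq nq2 prime_dvd_mult_iff by blast
    moreover have "fib (q+1) = fib q + fib (q - 1)" using qh
      by (metis add_Suc_right add_diff_cancel_right' fib.simps(3) plus_1_eq_Suc add.commute)
    then have "int (fib (q - 1)) = (int (fib (q+1)) - 1) - (int (fib q) - 1)" by simp
    ultimately have "int q dvd int (fib (q - 1))"
      by (metis dvd_diff)
    then show ?thesis by simp
  next
    assume h1: "int q dvd 5^h + 1"
    have "int q dvd 2 * int (fib (q+1))"
      using dvd_add[OF c2 h1] by simp
    then have "int q dvd int (fib (q+1))" using pq nq2 prime_dvd_mult_iff by blast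
    then show ?thesis by simp
  qed
qed


datatype zq = ZQ int int

fun q1 :: "zq \<Rightarrow> int" where "q1 (ZQ a b) = a"
fun q2 :: "zq \<Rightarrow> int" where "q2 (ZQ a b) = b"

lemma zq_eq0: "x = y \<longleftrightarrow> q1 x = q1 y \<and> q2 x = q2 y"
  by (cases x; cases y) auto

instantiation zq :: comm_ring_1
begin
definition "0 = ZQ 0 0"
definition "1 = ZQ 1 0"
definition "x + y = ZQ (q1 x + q1 y) (q2 x + q2 y)"
definition "x - y = ZQ (q1 x - q1 y) (q2 x - q2 y)"
definition "- x = ZQ (- q1 x) (- q2 x)"
definition "x * y = ZQ (q1 x * q1 y + q2 x * q2 y) (q1 x * q2 y + q2 x * q1 y + q2 x * q2 y)"
instance
  apply standard
  by (simp_all add: zq_eq0 zero_zq_def one_zq_def plus_zq_def minus_zq_def uminus_zq_def times_zq_def algebra_simps)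
end

lemma q_simps[simp]: "q1 0 = 0" "q2 0 = 0" "q1 1 = 1" "q2 1 = 0"
  "q1 (x+y) = q1 x + q1 y" "q2 (x+y) = q2 x + q2 y"
  "q1 (x*y) = q1 x * q1 y + q2 x * q2 y" "q2 (x*y) = q1 x * q2 y + q2 x * q1 y + q2 x * q2 y"
  "q1 (x-y) = q1 x - q1 y" "q2 (x-y) = q2 x - q2 y"
  by (simp_all add: zero_zq_def one_zq_def plus_zq_def times_zq_def minus_zq_def)

lemma q_of_nat[simp]: "q1 (of_nat n) = int n" "q2 (of_nat n) = 0"
  by (induct n) simp_all

lemma q_of_int[simp]: "q1 (of_int n) = n" "q2 (of_int n) = 0"
  by (induct n rule: int_induct[of _ 0]) (simp_all add: algebra_simps)

lemma q2_cmul: "q2 (of_int c * z) = c * q2 z"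
  by simp

lemma q_sum: "q2 (sum f A) = (\<Sum>x\<in>A. q2 (f x))"
  by (induct A rule: infinite_finite_induct) simp_all

lemma Q_pow: "ZQ 0 1 ^ n = ZQ (int (fib (Suc n)) - int (fib n)) (int (fib n))"
  by (induct n) (simp_all add: zq_eq0 power_Suc2)

lemma fib_mult_sum:
  "int (fib (Suc y * q)) = (\<Sum>j\<le>q. int (q choose j) * int (fib (Suc y)) ^ j * int (fib y) ^ (q - j) * int (fib j))"
proof -
  define f where "f = int (fib (Suc y))"
  define b where "b = int (fib y)"
  have e: "ZQ 0 1 ^ Suc y = of_int f * ZQ 0 1 + of_int b"
    by (simp add: Q_pow zq_eq0 f_def b_def)
  have "ZQ 0 1 ^ (Suc y * q) = (ZQ 0 1 ^ Suc y) ^ q"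
    by (rule power_mult)
  also have "\<dots> = (of_int f * ZQ 0 1 + of_int b) ^ q"
    by (simp only: e)
  also have "\<dots> = (\<Sum>j\<le>q. of_nat (q choose j) * (of_int f * ZQ 0 1) ^ j * of_int b ^ (q - j))"
    by (rule binomial_ring)
  also have "\<dots> = (\<Sum>j\<le>q. of_int (int (q choose j) * f ^ j * b ^ (q - j)) * ZQ 0 1 ^ j)"
    by (rule sum.cong) (simp_all add: power_mult_distrib algebra_simps)
  finally have "q2 (ZQ 0 1 ^ (Suc y * q)) = q2 (\<Sum>j\<le>q. of_int (int (q choose j) * f ^ j * b ^ (q - j)) * ZQ 0 1 ^ j)"
    by simp
  then show ?thesis
    by (simp only: q_sum q2_cmul Q_pow q2.simps) (simp add: f_def b_def algebra_simps)
qed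


definition cof :: "nat \<Rightarrow> nat \<Rightarrow> int" where
  "cof y q = (\<Sum>j\<in>{1..q}. int (q choose j) * int (fib (Suc y)) ^ (j - 1) * int (fib y) ^ (q - j) * int (fib j))"

lemma sum_ins0: "(g::nat\<Rightarrow>int) 0 = 0 \<Longrightarrow> (\<Sum>j\<in>insert 0 {1..q}. g j) = (\<Sum>j\<in>{1..(q::nat)}. g j)"
  by (subst sum.insert) auto

lemma fib_cof: "int (fib (Suc y * q)) = int (fib (Suc y)) * cof y q"
proof -
  define F where "F = int (fib (Suc y))"
  define g where "g j = int (q choose j) * F ^ j * int (fib y) ^ (q - j) * int (fib j)" for j
  have sp: "{..q} = insert 0 {1..q}" by auto
  have "int (fib (Suc y * q)) = sum g {..q}"
    unfolding g_def F_def by (rule fib_mult_sum)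
  also have "\<dots> = sum g {1..q}"
    unfolding sp by (rule sum_ins0) (simp add: g_def)
  also have "\<dots> = (\<Sum>j\<in>{1..q}. F * (int (q choose j) * F ^ (j - 1) * int (fib y) ^ (q - j) * int (fib j)))"
  proof (rule sum.cong)
    fix j assume "j \<in> {1..q}"
    then have "j = Suc (j - 1)" by simp
    then have "F ^ j = F * F ^ (j - 1)"
      by (metis power_Suc)
    then show "g j = F * (int (q choose j) * F ^ (j - 1) * int (fib y) ^ (q - j) * int (fib j))"
      unfolding g_def by simp
  qed simp
  also have "\<dots> = F * cof y q"
    unfolding cof_def F_def by (rule sum_distrib_left[symmetric])
  finally show ?thesis unfolding F_def .
qed

lemma cof_mod1: "int (fib (Suc y)) dvd cof y q - int q * int (fib y) ^ (q - 1)"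
proof (cases "q = 0")
  case True then show ?thesis by (simp add: cof_def)
next
  case False
  then have sp: "{1..q} = insert 1 {2..q}" by auto
  have "cof y q = int q * int (fib y) ^ (q - 1) + (\<Sum>j\<in>{2..q}. int (q choose j) * int (fib (Suc y)) ^ (j - 1) * int (fib y) ^ (q - j) * int (fib j))"
    unfolding cof_def sp by (subst sum.insert) auto
  moreover have "int (fib (Suc y)) dvd (\<Sum>j\<in>{2..q}. int (q choose j) * int (fib (Suc y)) ^ (j - 1) * int (fib y) ^ (q - j) * int (fib j))"
  proof (rule dvd_sum)
    fix j assume "j \<in> {2..q}"
    then have "int (fib (Suc y)) dvd int (fib (Suc y)) ^ (j - 1)" by (intro dvd_power) auto
    then show "int (fib (Suc y)) dvd int (q choose j) * int (fib (Suc y)) ^ (j - 1) * int (fib y) ^ (q - j) * int (fib j)"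
      by (rule dvd_mult2[OF dvd_mult2[OF dvd_mult]])
  qed
  ultimately show ?thesis by (simp only: add_diff_cancel_left')
qed

lemma cof_mod2:
  assumes p: "prime p" and pf: "int p dvd int (fib (Suc y))"
    and p2: "p \<noteq> 2 \<or> 4 dvd int (fib (Suc y))"
  shows "int p ^ 2 dvd cof y p - int p * int (fib y) ^ (p - 1)"
proof -
  have p1: "p \<ge> 2" using p prime_ge_2_nat by blast
  then have sp: "{1..p} = insert 1 {2..p}" by auto
  have "cof y p = int p * int (fib y) ^ (p - 1) + (\<Sum>j\<in>{2..p}. int (p choose j) * int (fib (Suc y)) ^ (j - 1) * int (fib y) ^ (p - j) * int (fib j))"
    unfolding cof_def sp by (subst sum.insert) auto
  moreover have "int p ^ 2 dvd (\<Sum>j\<in>{2..p}. int (p choose j) * int (fib (Suc y)) ^ (j - 1) * int (fib y) ^ (p - j) * int (fib j))"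
  proof (rule dvd_sum)
    fix j assume j: "j \<in> {2..p}"
    have "int p ^ 2 dvd int (p choose j) * int (fib (Suc y)) ^ (j - 1)"
    proof (cases "j = p")
      case True
      show ?thesis
      proof (cases "p = 2")
        case True
        then have "int p ^ 2 = 4" by simp
        moreover have "4 dvd int (fib (Suc y))" using p2 True by simp
        ultimately show ?thesis using True \<open>j = p\<close> by simp
      next
        case False
        then have "p \<ge> 3" using p1 by simp
        then have "j - 1 = 2 + (j - 3)" using True by simp
        then have "int (fib (Suc y)) ^ (j - 1) = int (fib (Suc y)) ^ 2 * int (fib (Suc y)) ^ (j - 3)"
          by (simp only: power_add)
        moreover have "int p ^ 2 dvd int (fib (Suc y)) ^ 2" using pf by (rule dvd_power_same)
        ultimately have "int p ^ 2 dvd int (fib (Suc y)) ^ (j - 1)" by (metis dvd_mult2)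
        then show ?thesis by (rule dvd_mult)
      qed
    next
      case False
      then have "p dvd (p choose j)" using j p by (intro dvd_choose_prime) auto
      then have a: "int p dvd int (p choose j)" by simp
      have "j - 1 \<noteq> 0" using j by simp
      then have "int (fib (Suc y)) dvd int (fib (Suc y)) ^ (j - 1)" by (intro dvd_power) auto
      then have "int p dvd int (fib (Suc y)) ^ (j - 1)" by (rule dvd_trans[OF pf])
      with a have "int p * int p dvd int (p choose j) * int (fib (Suc y)) ^ (j - 1)" by (rule mult_dvd_mono)
      then show ?thesis by (simp add: power2_eq_square)
    qed
    then show "int p ^ 2 dvd int (p choose j) * int (fib (Suc y)) ^ (j - 1) * int (fib y) ^ (p - j) * int (fib j)"
      by (rule dvd_mult2[OF dvd_mult2])
  qed
  ultimately show ?thesis by (simp only: add_diff_cancel_left')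
qed

lemma fib_dvd_fib: "m dvd n \<Longrightarrow> fib m dvd fib n"
proof -
  assume "m dvd n"
  then have "gcd m n = m" by (simp add: gcd_nat.absorb1)
  then have "fib m = gcd (fib m) (fib n)" by (metis fib_gcd)
  then show ?thesis by (metis gcd_dvd2)
qed

lemma L_mult:
  fixes a c x :: nat
  assumes "a dvd fib x" "c dvd fib x"
  shows "a * c dvd fib (a * x)"
proof (cases x)
  case 0 then show ?thesis by simp
next
  case (Suc y)
  define F where "F = int (fib (Suc y))"
  define b where "b = int (fib y)"
  obtain w where w: "cof y a - int a * b ^ (a - 1) = F * w"
    using cof_mod1[of y a] unfolding F_def b_def by (auto elim: dvdE)
  have e: "int (fib (a * x)) = F * (int a * b ^ (a - 1)) + F * F * w"
  proof -
    have "int (fib (a * x)) = F * cof y a" using fib_cof[of y a] Suc F_def by (simp add: mult.commute)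
    also have "\<dots> = F * (int a * b ^ (a - 1) + F * w)" using w by (simp add: algebra_simps)
    finally show ?thesis by (simp add: algebra_simps)
  qed
  have ia: "int a dvd F" and ic: "int c dvd F" using assms Suc F_def by simp_all
  have "int a * int c dvd F * (int a * b ^ (a - 1))"
    using ic by (metis dvd_mult dvd_mult2 mult.commute mult_dvd_mono dvd_refl)
  moreover have "int a * int c dvd F * F * w"
    using ia ic by (intro dvd_mult2 mult_dvd_mono)
  ultimately have "int a * int c dvd int (fib (a * x))" unfolding e by (rule dvd_add)
  then show ?thesis by (metis of_nat_dvd_iff of_nat_mult)
qed

lemma fib_3: "fib 3 = 2" by (simp add: numeral_eq_Suc)
lemma fib_5: "fib 5 = 5" by (simp add: numeral_eq_Suc)

lemma prime_fib_exists:
  assumes "prime q" shows "\<exists>y>0. q dvd fib y"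
proof -
  have q2: "q \<ge> 2" using assms prime_ge_2_nat by blast
  show ?thesis
  proof (cases "q = 2")
    case True then show ?thesis using fib_3 by (intro exI[of _ 3]) simp
  next
    case n2: False
    show ?thesis
    proof (cases "q = 5")
      case True then show ?thesis using fib_5 by (intro exI[of _ 5]) simp
    next
      case False
      have "q - 1 > 0" "q + 1 > 0" using q2 by auto
      from prime_fib[OF assms n2 False] show ?thesis
      proof
        assume "q dvd fib (q - 1)"
        then show ?thesis using \<open>q - 1 > 0\<close> by (intro exI[of _ "q - 1"] conjI)
      next
        assume "q dvd fib (q + 1)"
        then show ?thesis using \<open>q + 1 > 0\<close> by (intro exI[of _ "q + 1"] conjI)
      qed
    qed
  qed
qed

lemma fib_exists: "n > 0 \<Longrightarrow> \<exists>m>0. n dvd fib m"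
proof (induction n rule: less_induct)
  case (less n)
  show ?case
  proof (cases "n = 1")
    case True then show ?thesis by (intro exI[of _ 1]) simp
  next
    case False
    then obtain q where q: "prime q" "q dvd n" using prime_factor_nat by blast
    define r where "r = n div q"
    have q2: "q \<ge> 2" using q prime_ge_2_nat by blast
    have nr: "n = q * r" using q r_def by simp
    have r0: "r > 0" using less.prems nr by (cases r) auto
    have rn: "r < n" using nr q2 r0 by simp
    obtain x where x: "x > 0" "r dvd fib x" using less.IH[OF rn r0] by blast
    obtain y where y: "y > 0" "q dvd fib y" using prime_fib_exists[OF q(1)] by blast
    show ?thesis
    proof (cases "q dvd r")
      case True
      then have "q dvd fib x" using x dvd_trans by blast
      then have "q * r dvd fib (q * x)" using x L_mult by blast
      then show ?thesis using nr x q2 by (intro exI[of _ "q * x"]) simp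
    next
      case False
      then have cop: "coprime q r" using q prime_imp_coprime by blast
      have "q dvd fib (x * y)" using y fib_dvd_fib[of y "x * y"] dvd_trans by auto
      moreover have "r dvd fib (x * y)" using x fib_dvd_fib[of x "x * y"] dvd_trans by auto
      ultimately have "q * r dvd fib (x * y)" using cop by (simp add: divides_mult)
      then show ?thesis using nr x y by (intro exI[of _ "x * y"]) simp
    qed
  qed
qed

lemma z_spec: "n > 0 \<Longrightarrow> 0 < zfib n \<and> n dvd fib (zfib n)"
  unfolding zfib_def by (rule LeastI_ex) (use fib_exists in blast)

lemma z_le: "0 < m \<Longrightarrow> n dvd fib m \<Longrightarrow> zfib n \<le> m"
  unfolding zfib_def by (rule Least_le) simp

lemma z_dvd_iff: "n > 0 \<Longrightarrow> n dvd fib m \<longleftrightarrow> zfib n dvd m"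
proof
  assume n: "n > 0" and d: "n dvd fib m"
  show "zfib n dvd m"
  proof (cases "m = 0")
    case True then show ?thesis by simp
  next
    case False
    define g where "g = gcd m (zfib n)"
    have z: "0 < zfib n" "n dvd fib (zfib n)" using z_spec[OF n] by auto
    have g0: "g > 0" using False g_def by simp
    have "n dvd gcd (fib m) (fib (zfib n))" using d z by simp
    then have "n dvd fib g" by (simp add: g_def fib_gcd)
    then have "zfib n \<le> g" using z_le g0 by blast
    moreover have "g dvd zfib n" unfolding g_def by simp
    ultimately have "g = zfib n" using z by (simp add: dvd_imp_le le_antisym)
    then show ?thesis by (metis g_def gcd_dvd1)
  qed
next
  assume n: "n > 0" and "zfib n dvd m"
  then show "n dvd fib m" using z_spec[OF n] fib_dvd_fib dvd_trans by blast
qed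

lemma z_mono: "0 < b \<Longrightarrow> a dvd b \<Longrightarrow> zfib a dvd zfib b"
proof -
  assume b: "0 < b" and ab: "a dvd b"
  then have a: "0 < a" by (metis dvd_0_left_iff gr0I not_less0)
  have "b dvd fib (zfib b)" using z_spec[OF b] by blast
  then have "a dvd fib (zfib b)" using ab dvd_trans by blast
  then show ?thesis using z_dvd_iff[OF a] by blast
qed

lemma z_eqI: "0 < m \<Longrightarrow> n dvd fib m \<Longrightarrow> (\<And>j. 0 < j \<Longrightarrow> j < m \<Longrightarrow> \<not> n dvd fib j) \<Longrightarrow> zfib n = m"
  unfolding zfib_def by (rule Least_equality) (auto simp: not_less[symmetric])

lemma z_lcm: "0 < a \<Longrightarrow> 0 < b \<Longrightarrow> zfib (lcm a b) = lcm (zfib a) (zfib b)"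
proof -
  assume a: "0 < a" and b: "0 < b"
  then have l: "0 < lcm a b" by (simp add: lcm_pos_nat)
  have "a dvd fib (lcm (zfib a) (zfib b))" using z_dvd_iff[OF a] by simp
  moreover have "b dvd fib (lcm (zfib a) (zfib b))" using z_dvd_iff[OF b] by simp
  ultimately have "lcm a b dvd fib (lcm (zfib a) (zfib b))" by (rule lcm_least)
  then have 1: "zfib (lcm a b) dvd lcm (zfib a) (zfib b)" using z_dvd_iff[OF l] by blast
  have 2: "lcm (zfib a) (zfib b) dvd zfib (lcm a b)"
    using z_mono[OF l] by (simp add: lcm_least)
  from 1 2 show ?thesis by (rule dvd_antisym)
qed

lemma z_prime_pow:
  assumes q: "prime q" shows "zfib (q ^ Suc e) dvd q ^ e * zfib q"
proof -
  have q0: "q > 0" using q prime_gt_0_nat by blast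
  have "q ^ Suc e dvd fib (q ^ e * zfib q)"
  proof (induct e)
    case 0 then show ?case using z_spec[OF q0] by simp
  next
    case (Suc e)
    then have "q dvd fib (q ^ e * zfib q)" by (metis dvd_trans dvd_power zero_less_Suc)
    then have "q * q ^ Suc e dvd fib (q * (q ^ e * zfib q))" using Suc L_mult by blast
    then show ?case by (simp add: mult.assoc)
  qed
  moreover have "q ^ Suc e > 0" using q0 by simp
  ultimately show ?thesis using z_dvd_iff by blast
qed

lemma fibs: "fib 3 = 2" "fib 4 = 3" "fib 5 = 5" "fib 6 = 8" "fib 7 = 13" "fib 8 = 21" "fib 9 = 34"
  "fib 10 = 55" "fib 11 = 89" "fib 12 = 144"
  by (simp_all add: numeral_eq_Suc)

lemma upto12: "0 < (j::nat) \<Longrightarrow> j < 12 \<Longrightarrow> j \<in> {1,2,3,4,5,6,7,8,9,10,11}"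
  by (simp; presburger)

lemma z1: "zfib 1 = 1" by (rule z_eqI) auto
lemma z2: "zfib 2 = 3" by (rule z_eqI) (auto simp: fibs dest!: upto12)
lemma z3: "zfib 3 = 4" by (rule z_eqI) (auto simp: fibs dest!: upto12)
lemma z4: "zfib 4 = 6" by (rule z_eqI) (auto simp: fibs dest!: upto12)
lemma z5: "zfib 5 = 5" by (rule z_eqI) (auto simp: fibs dest!: upto12)
lemma z6: "zfib 6 = 12" by (rule z_eqI) (auto simp: fibs dest!: upto12)
lemma z12: "zfib 12 = 12" by (rule z_eqI) (auto simp: fibs dest!: upto12)

lemma not_dvd_cof:
  assumes r: "prime r" and rf: "int r dvd int (fib (Suc y))" and rt: "\<not> r dvd t"
  shows "\<not> int r dvd cof y t"
proof
  assume h: "int r dvd cof y t"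
  obtain w where w: "cof y t - int t * int (fib y) ^ (t - 1) = int (fib (Suc y)) * w"
    using cof_mod1[of y t] by (auto elim: dvdE)
  have d2: "int r dvd int (fib (Suc y)) * w" using rf by (rule dvd_mult2)
  have eq: "int t * int (fib y) ^ (t - 1) = cof y t - int (fib (Suc y)) * w" using w by simp
  have "int r dvd int t * int (fib y) ^ (t - 1)"
    unfolding eq by (rule dvd_diff[OF h d2])
  moreover have pr: "prime (int r)" using r by simp
  ultimately have "int r dvd int t \<or> int r dvd int (fib y) ^ (t - 1)" by (simp add: prime_dvd_mult_iff)
  moreover have "\<not> int r dvd int t" using rt by simp
  ultimately have "int r dvd int (fib y) ^ (t - 1)" by blast
  then have "int r dvd int (fib y)" using pr prime_dvd_power by blast
  then have "r dvd fib y" "r dvd fib (Suc y)" using rf by simp_all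
  then have "r dvd gcd (fib y) (fib (Suc y))" by simp
  then have "r dvd 1" using coprime_fib_Suc_nat by (metis coprime_iff_gcd_eq_1)
  then show False using r by simp
qed

lemma V1:
  assumes r: "prime r" and x: "x > 0" and rf: "r dvd fib x" and rt: "\<not> r dvd t"
    and h: "r ^ a dvd fib (x * t)"
  shows "r ^ a dvd fib x"
proof -
  obtain y where y: "x = Suc y" using x by (cases x) auto
  have e: "int (fib (x * t)) = int (fib (Suc y)) * cof y t" using fib_cof[of y t] y by simp
  have nd: "\<not> int r dvd cof y t" using not_dvd_cof[OF r _ rt] rf y by simp
  have "coprime (int r) (cof y t)" using nd r by (simp add: prime_imp_coprime)
  then have cp: "coprime (int r ^ a) (cof y t)" by simp
  have "int r ^ a dvd int (fib (Suc y)) * cof y t" using h e by (metis of_nat_dvd_iff of_nat_power)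
  then have "int r ^ a dvd int (fib (Suc y))" using cp by (simp add: coprime_dvd_mult_left_iff)
  then show ?thesis using y by (metis of_nat_dvd_iff of_nat_power)
qed

lemma V2:
  assumes r: "prime r" and x: "x > 0" and rf: "r dvd fib x" and r2: "r \<noteq> 2 \<or> 4 dvd fib x"
    and h: "r ^ Suc a dvd fib (x * r)"
  shows "r ^ a dvd fib x"
proof -
  obtain y where y: "x = Suc y" using x by (cases x) auto
  have pr: "prime (int r)" using r by simp
  have r1: "r - 1 > 0" using r prime_ge_2_nat by (metis One_nat_def Suc_le_eq diff_Suc_1 diff_less_mono Suc_1 zero_less_diff)
  have e: "int (fib (x * r)) = int (fib (Suc y)) * cof y r" using fib_cof[of y r] y by simp
  have r2': "r \<noteq> 2 \<or> 4 dvd int (fib (Suc y))" using r2 y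
    by (metis of_nat_dvd_iff of_nat_numeral)
  obtain w where w: "cof y r - int r * int (fib y) ^ (r - 1) = int r ^ 2 * w"
    using cof_mod2[OF r _ r2'] rf y by (auto elim: dvdE)
  define u where "u = int (fib y) ^ (r - 1) + int r * w"
  have cu: "cof y r = int r * u" using w unfolding u_def by (simp add: algebra_simps power2_eq_square)
  have nu: "\<not> int r dvd u"
  proof
    assume "int r dvd u"
    moreover have "int r dvd int r * w" by simp
    ultimately have "int r dvd int (fib y) ^ (r - 1)" unfolding u_def using dvd_add_left_iff by blast
    then have "int r dvd int (fib y)" using pr prime_dvd_power by blast
    then have "r dvd fib y" "r dvd fib (Suc y)" using rf y by simp_all
    then have "r dvd gcd (fib y) (fib (Suc y))" by simp
    then have "r dvd 1" using coprime_fib_Suc_nat by (metis coprime_iff_gcd_eq_1)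
    then show False using r by simp
  qed
  have "int r ^ Suc a dvd int (fib (x * r))" using h by (metis of_nat_dvd_iff of_nat_power)
  then have "int r * int r ^ a dvd int r * (int (fib (Suc y)) * u)" using e cu by (simp add: algebra_simps)
  then have "int r ^ a dvd int (fib (Suc y)) * u" using r by (simp add: prime_gt_0_nat)
  moreover have "coprime (int r ^ a) u" using nu pr by (simp add: prime_imp_coprime)
  ultimately have "int r ^ a dvd int (fib (Suc y))" by (simp add: coprime_dvd_mult_left_iff)
  then show ?thesis using y by (metis of_nat_dvd_iff of_nat_power)
qed

lemma Desc:
  assumes r: "prime r" and rt: "\<not> r dvd t"
  shows "x > 0 \<Longrightarrow> r dvd fib x \<Longrightarrow> (r \<noteq> 2 \<or> 4 dvd fib x) \<Longrightarrow> r ^ (a + d) dvd fib (x * r ^ d * t) \<Longrightarrow> r ^ a dvd fib x"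
proof (induct d arbitrary: a x)
  case 0 then show ?case using V1[OF r _ _ rt] by simp
next
  case (Suc d)
  have r0: "r > 0" using r prime_gt_0_nat by blast
  have x': "x * r > 0" using Suc.prems r0 by simp
  have fd: "fib x dvd fib (x * r)" by (rule fib_dvd_fib) simp
  have "r dvd fib (x * r)" using Suc.prems(2) fd dvd_trans by blast
  moreover have "r \<noteq> 2 \<or> 4 dvd fib (x * r)" using Suc.prems(3) fd dvd_trans by blast
  moreover have "r ^ (Suc a + d) dvd fib (x * r * r ^ d * t)"
    using Suc.prems(4) by (simp add: mult.assoc mult.left_commute)
  ultimately have "r ^ Suc a dvd fib (x * r)" using Suc.hyps[OF x'] by blast
  then show ?case using V2[OF r Suc.prems(1,2,3)] by blast
qed

lemma ppow_lcm:
  fixes P x y :: nat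
  assumes P: "prime P" and x: "x > 0" and y: "y > 0" and h: "P ^ E dvd lcm x y"
  shows "P ^ E dvd x \<or> P ^ E dvd y"
proof -
  have nu: "\<not> is_unit P" using P not_prime_unit by blast
  have l0: "lcm x y \<noteq> 0" using x y by simp
  have "E \<le> multiplicity P (lcm x y)" using h power_dvd_iff_le_multiplicity[OF l0 nu] by blast
  also have "\<dots> = max (multiplicity P x) (multiplicity P y)" using multiplicity_lcm[of x y P] x y P by simp
  finally have "E \<le> multiplicity P x \<or> E \<le> multiplicity P y" by linarith
  then show ?thesis using power_dvd_iff_le_multiplicity[of x P E] power_dvd_iff_le_multiplicity[of y P E] x y nu
    by auto
qed

lemma kill:
  fixes P K :: nat
  assumes P: "prime P" and nP: "\<not> P dvd zfib P"
  shows "0 < c \<Longrightarrow> K < E \<Longrightarrow> P ^ E dvd zfib c \<Longrightarrow>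
    (\<forall>q. prime q \<longrightarrow> q dvd c \<longrightarrow> q \<noteq> P \<longrightarrow> \<not> P ^ Suc K dvd zfib q) \<Longrightarrow> P ^ Suc E dvd c"
proof (induction c arbitrary: E rule: less_induct)
  case (less c)
  have P2: "P \<ge> 2" using P prime_ge_2_nat by blast
  show ?case
  proof (cases "c = 1")
    case True
    then have "P ^ E dvd 1" using less.prems z1 by simp
    then have "P ^ E = 1" by simp
    have "E = 0"
    proof (rule ccontr)
      assume "E \<noteq> 0"
      then have "1 < P ^ E" using P2 one_less_power[of P E] by linarith
      then show False using \<open>P ^ E = 1\<close> by simp
    qed
    then show ?thesis using less.prems by simp
  next
    case False
    then obtain q where q: "prime q" "q dvd c" using prime_factor_nat by blast
    have cn: "c \<noteq> 0" using less.prems(1) by simp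
    have qu: "\<not> is_unit q" using q(1) not_prime_unit by blast
    define e where "e = multiplicity q c"
    obtain r where cr: "c = q ^ e * r" and qr: "\<not> q dvd r"
    proof -
      show ?thesis using multiplicity_decompose'[OF cn qu] e_def that by blast
    qed
    have e0: "e > 0" using q e_def multiplicity_gt_zero_iff[OF cn qu] by simp
    then obtain e' where e': "e = Suc e'" by (cases e) auto
    have q2: "q \<ge> 2" using q prime_ge_2_nat by blast
    have r0: "r > 0" using cr less.prems(1) by (cases r) auto
    have qe: "q ^ e > 1" using q2 e0 one_less_power[of q e] by linarith
    have rc: "r < c" using cr qe r0 by simp
    have qe0: "q ^ e > 0" using q2 by simp
    have cop: "coprime (q ^ e) r" using qr q by (simp add: prime_imp_coprime)
    have "lcm (q ^ e) r = q ^ e * r" using lcm_coprime[OF cop] by simp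
    then have "zfib c = lcm (zfib (q ^ e)) (zfib r)" using z_lcm[OF qe0 r0] cr by simp
    then have "P ^ E dvd lcm (zfib (q ^ e)) (zfib r)" using less.prems(3) by simp
    moreover have "zfib (q ^ e) > 0" "zfib r > 0" using z_spec qe0 r0 by auto
    ultimately have cases: "P ^ E dvd zfib (q ^ e) \<or> P ^ E dvd zfib r" using ppow_lcm[OF P] by blast
    show ?thesis
    proof (cases "P ^ E dvd zfib r")
      case True
      have "\<forall>q'. prime q' \<longrightarrow> q' dvd r \<longrightarrow> q' \<noteq> P \<longrightarrow> \<not> P ^ Suc K dvd zfib q'"
        using less.prems(4) cr by (metis dvd_mult dvd_trans)
      then have "P ^ Suc E dvd r" using less.IH[OF rc r0 less.prems(2) True] by blast
      then show ?thesis using cr by simp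
    next
      case False
      with cases have "P ^ E dvd zfib (q ^ e)" by blast
      then have h: "P ^ E dvd q ^ e' * zfib q" using z_prime_pow[OF q(1), of e'] e' dvd_trans by blast
      show ?thesis
      proof (cases "q = P")
        case True
        have "coprime P (zfib P)" using P nP by (simp add: prime_imp_coprime)
        then have "coprime (P ^ E) (zfib P)" by simp
        then have "P ^ E dvd P ^ e'" using h True by (simp add: coprime_dvd_mult_left_iff)
        then have "E \<le> e'" using P2 dvd_power_iff_le by blast
        then have "P ^ Suc E dvd P ^ e" using e' by (simp add: le_imp_power_dvd)
        then show ?thesis using cr True by simp
      next
        case False
        have "coprime P q" using P q(1) False by (simp add: primes_coprime)
        then have "coprime (P ^ E) (q ^ e')" by simp
        then have "P ^ E dvd zfib q" using h by (simp add: coprime_dvd_mult_right_iff)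
        moreover have "P ^ Suc K dvd P ^ E" using less.prems(2) le_imp_power_dvd[of "Suc K" E P] by simp
        ultimately have "P ^ Suc K dvd zfib q" by (rule dvd_trans[rotated])
        then show ?thesis using less.prems(4) q False by blast
      qed
    qed
  qed
qed

lemma G5: "0 < d \<Longrightarrow> (\<forall>r. prime r \<longrightarrow> r dvd d \<longrightarrow> r = 5) \<Longrightarrow> d dvd fib d"
proof (induction d rule: less_induct)
  case (less d)
  show ?case
  proof (cases "d = 1")
    case True then show ?thesis by simp
  next
    case False
    then obtain r where r: "prime r" "r dvd d" using prime_factor_nat by blast
    then have r5: "r = 5" using less.prems by blast
    define d' where "d' = d div 5"
    have dd: "d = 5 * d'" using r r5 d'_def by simp
    have d0: "d' > 0" using dd less.prems(1) by (cases d') auto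
    show ?thesis
    proof (cases "d' = 1")
      case True then show ?thesis using dd fib_5 by simp
    next
      case False
      then obtain r' where r': "prime r'" "r' dvd d'" using prime_factor_nat by blast
      then have "r' dvd d" using dd by simp
      then have "r' = 5" using less.prems r' by blast
      then have 5: "5 dvd d'" using r' by simp
      have "d' < d" using dd d0 by simp
      moreover have "\<forall>r. prime r \<longrightarrow> r dvd d' \<longrightarrow> r = 5" using less.prems dd by (metis dvd_mult dvd_trans)
      ultimately have "d' dvd fib d'" using less.IH d0 by blast
      moreover have "5 dvd fib d'" using 5 calculation dvd_trans by blast
      ultimately have "5 * d' dvd fib (5 * d')" using L_mult by blast
      then show ?thesis using dd by simp
    qed
  qed
qed

lemma prime_ge7: "prime (q::nat) \<Longrightarrow> q \<noteq> 2 \<Longrightarrow> q \<noteq> 3 \<Longrightarrow> q \<noteq> 5 \<Longrightarrow> 7 \<le> q"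
proof -
  assume q: "prime q" "q \<noteq> 2" "q \<noteq> 3" "q \<noteq> 5"
  have "q \<ge> 2" using q prime_ge_2_nat by blast
  moreover have "q \<noteq> 4" "q \<noteq> 6"
  proof -
    have "\<not> 2 dvd q" using q by (metis primes_dvd_imp_eq two_is_prime_nat)
    then show "q \<noteq> 4" "q \<noteq> 6" by auto
  qed
  ultimately show ?thesis using q by linarith
qed

lemma z_prime_dvd: "prime q \<Longrightarrow> q \<noteq> 2 \<Longrightarrow> q \<noteq> 5 \<Longrightarrow> zfib q dvd q - 1 \<or> zfib q dvd q + 1"
proof -
  assume q: "prime q" "q \<noteq> 2" "q \<noteq> 5"
  then have q0: "q > 0" using prime_gt_0_nat by blast
  from prime_fib[OF q] show ?thesis using z_dvd_iff[OF q0] by blast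
qed

lemma orb_pos: "0 < c \<Longrightarrow> 0 < (zfib ^^ t) c"
  by (induct t) (simp_all add: z_spec)

lemma orb_per: "(zfib ^^ p) c = c \<Longrightarrow> (zfib ^^ (t + N * p)) c = (zfib ^^ t) c"
proof (induct N)
  case 0 then show ?case by simp
next
  case (Suc N)
  have e: "t + Suc N * p = (t + N * p) + p" by simp
  have "(zfib ^^ (t + Suc N * p)) c = (zfib ^^ (t + N * p)) ((zfib ^^ p) c)"
    by (simp only: e funpow_add[of "t + N * p" p zfib] o_apply)
  then show ?case using Suc by simp
qed

lemma orb_step: "0 < c \<Longrightarrow> a dvd (zfib ^^ t) c \<Longrightarrow> zfib a dvd (zfib ^^ Suc t) c"
  using z_mono[OF orb_pos] by simp

lemma cyc_kill:
  assumes c: "0 < c" and p: "0 < p" and cyc: "(zfib ^^ p) c = c"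
    and P: "prime P" and nP: "\<not> P dvd zfib P"
    and hq: "\<forall>t q. prime q \<longrightarrow> q dvd (zfib ^^ t) c \<longrightarrow> q \<noteq> P \<longrightarrow> \<not> P ^ Suc K dvd zfib q"
  shows "\<not> P ^ Suc K dvd (zfib ^^ t) c"
proof
  assume h: "P ^ Suc K dvd (zfib ^^ t) c"
  have claim: "\<And>t. P ^ Suc K dvd (zfib ^^ (t + j)) c \<Longrightarrow> P ^ (Suc K + j) dvd (zfib ^^ t) c" for j
  proof (induct j)
    case 0 then show ?case by simp
  next
    case (Suc j)
    have "(zfib ^^ (t + Suc j)) c = (zfib ^^ (Suc t + j)) c" by simp
    then have "P ^ (Suc K + j) dvd (zfib ^^ Suc t) c" using Suc by metis
    then have "P ^ (Suc K + j) dvd zfib ((zfib ^^ t) c)" by simp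
    moreover have "\<forall>q. prime q \<longrightarrow> q dvd (zfib ^^ t) c \<longrightarrow> q \<noteq> P \<longrightarrow> \<not> P ^ Suc K dvd zfib q"
      using hq by blast
    moreover have lt: "K < Suc K + j" by simp
    ultimately have "P ^ Suc (Suc K + j) dvd (zfib ^^ t) c"
      using kill[OF P nP orb_pos[OF c] lt] by blast
    then show ?case by simp
  qed
  define N where "N = (zfib ^^ t) c"
  have N0: "N > 0" using orb_pos[OF c] N_def by simp
  have "(zfib ^^ (t + N * p)) c = N" using orb_per[OF cyc] N_def by simp
  then have "P ^ (Suc K + N * p) dvd N" using claim[of t "N * p"] h N_def by simp
  then have le: "P ^ (Suc K + N * p) \<le> N" using N0 dvd_imp_le by blast
  have P2: "2 \<le> P" using P prime_ge_2_nat by blast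
  have "N \<le> N * p" using p by simp
  then have NN: "N \<le> Suc K + N * p" by linarith
  have "N < 2 ^ N" by (rule less_exp)
  also have "(2::nat) ^ N \<le> 2 ^ (Suc K + N * p)" using NN by (intro power_increasing) auto
  also have "\<dots> \<le> P ^ (Suc K + N * p)" using P2 by (rule power_mono) simp
  finally show False using le by simp
qed

lemma cycle_fixed:
  assumes c: "0 < c" and p: "0 < p" and cyc: "(zfib ^^ p) c = c"
  shows "zfib c = c"
proof -
  define orb where "orb t = (zfib ^^ t) c" for t
  have opos: "\<And>t. 0 < orb t" using orb_pos[OF c] orb_def by simp
  have oS: "\<And>t. orb (Suc t) = zfib (orb t)" by (simp add: orb_def)
  have ostep: "\<And>a t. a dvd orb t \<Longrightarrow> zfib a dvd orb (Suc t)"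
    using orb_step[OF c] orb_def by simp
  have oper: "\<And>t N. orb (t + N * p) = orb t" using orb_per[OF cyc] orb_def by simp
  have omod: "\<And>t. orb t = orb (t mod p)"
  proof -
    fix t
    have a: "orb (t mod p + (t div p) * p) = orb (t mod p)" by (rule oper)
    have b: "t mod p + (t div p) * p = t" by simp
    from a show "orb t = orb (t mod p)" unfolding b .
  qed
  define B where "B = Max (orb ` {..<p})"
  have oB: "\<And>t. orb t \<le> B"
  proof -
    fix t
    have "t mod p \<in> {..<p}" using p by simp
    then have "orb (t mod p) \<le> B" unfolding B_def by (intro Max_ge) auto
    then show "orb t \<le> B" using omod by simp
  qed
  have ckill: "\<And>P K t. prime P \<Longrightarrow> \<not> P dvd zfib P \<Longrightarrow>
      (\<forall>t q. prime q \<longrightarrow> q dvd orb t \<longrightarrow> q \<noteq> P \<longrightarrow> \<not> P ^ Suc K dvd zfib q) \<Longrightarrow> \<not> P ^ Suc K dvd orb t"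
    using cyc_kill[OF c p cyc] orb_def by simp
  have small: "\<And>t P. prime P \<Longrightarrow> P dvd orb t \<Longrightarrow> P = 2 \<or> P = 3 \<or> P = 5"
  proof (rule ccontr)
    fix t0 P0
    assume P0: "prime P0" "P0 dvd orb t0" and n: "\<not> (P0 = 2 \<or> P0 = 3 \<or> P0 = 5)"
    define S where "S = {P. prime P \<and> 7 \<le> P \<and> (\<exists>t. P dvd orb t)}"
    have "S \<subseteq> {..B}"
    proof
      fix P assume "P \<in> S"
      then obtain t where "P dvd orb t" unfolding S_def by blast
      then have "P \<le> orb t" using opos dvd_imp_le by blast
      then show "P \<in> {..B}" using oB[of t] by simp
    qed
    then have fS: "finite S" using finite_subset by blast
    have "P0 \<in> S" using P0 n prime_ge7 unfolding S_def by blast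
    then have neS: "S \<noteq> {}" by blast
    define P where "P = Max S"
    have PS: "P \<in> S" unfolding P_def using fS neS by (rule Max_in)
    then have Pp: "prime P" and P7: "7 \<le> P" and Pt: "\<exists>t. P dvd orb t" unfolding S_def by auto
    have Pmax: "\<And>q. q \<in> S \<Longrightarrow> q \<le> P" unfolding P_def using fS by simp
    have nP: "\<not> P dvd zfib P"
    proof
      assume h: "P dvd zfib P"
      have "zfib P dvd P - 1 \<or> zfib P dvd P + 1" using z_prime_dvd[OF Pp] P7 by simp
      then have "P dvd P - 1 \<or> P dvd P + 1" using h dvd_trans by blast
      then show False
      proof
        assume "P dvd P - 1"
        then have "P \<le> P - 1" using P7 dvd_imp_le by simp
        then show False using P7 by simp
      next
        assume a: "P dvd P + 1"
        have "P dvd 1" using dvd_add_right_iff[OF dvd_refl[of P], of 1] a by blast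
        then show False using P7 by simp
      qed
    qed
    have cond: "\<forall>t q. prime q \<longrightarrow> q dvd orb t \<longrightarrow> q \<noteq> P \<longrightarrow> \<not> P ^ Suc 0 dvd zfib q"
    proof (intro allI impI)
      fix t q assume q: "prime q" "q dvd orb t" "q \<noteq> P"
      show "\<not> P ^ Suc 0 dvd zfib q"
      proof
        assume "P ^ Suc 0 dvd zfib q"
        then have h: "P dvd zfib q" by simp
        show False
        proof (cases "q = 2 \<or> q = 3 \<or> q = 5")
          case True
          then have "zfib q \<in> {3, 4, 5}" using z2 z3 z5 by auto
          then have "P \<le> 5" using h by (auto dest: dvd_imp_le)
          then show False using P7 by simp
        next
          case False
          then have q7: "7 \<le> q" using prime_ge7 q(1) by blast
          then have "q \<in> S" using q unfolding S_def by blast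
          then have qP: "q \<le> P" using Pmax by blast
          have "zfib q dvd q - 1 \<or> zfib q dvd q + 1" using z_prime_dvd[OF q(1)] q7 by simp
          then have "P dvd q - 1 \<or> P dvd q + 1" using h dvd_trans by blast
          then have "P < q"
          proof
            assume "P dvd q - 1"
            then have "P \<le> q - 1" using q7 dvd_imp_le by simp
            then show "P < q" using q7 by simp
          next
            assume a: "P dvd q + 1"
            have "q \<noteq> 2" using q7 by simp
            then have "odd q" using q(1) by (metis primes_dvd_imp_eq two_is_prime_nat)
            then have e: "q + 1 = 2 * ((q + 1) div 2)" by presburger
            have "P \<noteq> 2" using P7 by simp
            then have "coprime P 2" using Pp primes_coprime two_is_prime_nat by blast
            moreover have "P dvd 2 * ((q + 1) div 2)" using a e by simp
            ultimately have "P dvd (q + 1) div 2" using coprime_dvd_mult_right_iff by blast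
            then have "P \<le> (q + 1) div 2" using q7 dvd_imp_le by simp
            then show "P < q" using q7 by linarith
          qed
          then show False using qP by simp
        qed
      qed
    qed
    obtain t where "P dvd orb t" using Pt by blast
    moreover have "\<not> P ^ Suc 0 dvd orb t" using ckill[OF Pp nP cond] .
    ultimately show False by simp
  qed
  have n9: "\<And>t. \<not> 9 dvd orb t"
  proof -
    fix t
    have p3: "prime (3::nat)" by simp
    have "\<not> 3 dvd zfib 3" using z3 by simp
    moreover have "\<forall>t q. prime q \<longrightarrow> q dvd orb t \<longrightarrow> q \<noteq> 3 \<longrightarrow> \<not> 3 ^ Suc 1 dvd zfib q"
    proof (intro allI impI)
      fix t q assume q: "prime q" "q dvd orb t" "q \<noteq> 3"
      then have "q = 2 \<or> q = 5" using small by blast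
      then show "\<not> 3 ^ Suc 1 dvd zfib q" using z2 z5 by auto
    qed
    ultimately have "\<not> 3 ^ Suc 1 dvd orb t" using ckill[OF p3] by blast
    then show "\<not> 9 dvd orb t" by simp
  qed
  have n8: "\<And>t. \<not> 8 dvd orb t"
  proof -
    fix t
    have p2: "prime (2::nat)" by simp
    have "\<not> 2 dvd zfib 2" using z2 by simp
    moreover have "\<forall>t q. prime q \<longrightarrow> q dvd orb t \<longrightarrow> q \<noteq> 2 \<longrightarrow> \<not> 2 ^ Suc 2 dvd zfib q"
    proof (intro allI impI)
      fix t q assume q: "prime q" "q dvd orb t" "q \<noteq> 2"
      then have "q = 3 \<or> q = 5" using small by blast
      then show "\<not> 2 ^ Suc 2 dvd zfib q" using z3 z5 by auto
    qed
    ultimately have "\<not> 2 ^ Suc 2 dvd orb t" using ckill[OF p2] by blast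
    then show "\<not> 8 dvd orb t" by simp
  qed
  have good: "\<And>t. orb t dvd fib (orb t)"
  proof (cases "\<exists>s. 2 dvd orb s \<or> 3 dvd orb s")
    case True
    then obtain s where s: "2 dvd orb s \<or> 3 dvd orb s" by blast
    define u where "u = s + 3"
    have "3 dvd orb u"
    proof (cases "2 dvd orb s")
      case True
      then have "3 dvd orb (Suc s)" using ostep[of 2 s] z2 by simp
      then have "4 dvd orb (Suc (Suc s))" using ostep[of 3 "Suc s"] z3 by simp
      then have "6 dvd orb (Suc (Suc (Suc s)))" using ostep[of 4 "Suc (Suc s)"] z4 by simp
      then have "3 dvd orb (Suc (Suc (Suc s)))" using dvd_trans[of "3::nat" 6] by simp
      moreover have "u = Suc (Suc (Suc s))" unfolding u_def by (simp add: numeral_3_eq_3)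
      ultimately show ?thesis by simp
    next
      case False
      then have "3 dvd orb s" using s by blast
      then have "4 dvd orb (Suc s)" using ostep[of 3 s] z3 by simp
      then have "6 dvd orb (Suc (Suc s))" using ostep[of 4 "Suc s"] z4 by simp
      then have "12 dvd orb (Suc (Suc (Suc s)))" using ostep[of 6 "Suc (Suc s)"] z6 by simp
      then have "3 dvd orb (Suc (Suc (Suc s)))" using dvd_trans[of "3::nat" 12] by simp
      moreover have "u = Suc (Suc (Suc s))" unfolding u_def by (simp add: numeral_3_eq_3)
      ultimately show ?thesis by simp
    qed
    then have "4 dvd orb (Suc u)" using ostep[of 3 u] z3 by simp
    then have "6 dvd orb (Suc (Suc u))" using ostep[of 4 "Suc u"] z4 by simp
    then have v12: "12 dvd orb (Suc (Suc (Suc u)))" using ostep[of 6 "Suc (Suc u)"] z6 by simp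
    define v where "v = Suc (Suc (Suc u))"
    have all12: "\<And>n. 12 dvd orb (v + n)"
    proof -
      fix n show "12 dvd orb (v + n)"
      proof (induct n)
        case 0 then show ?case using v12 v_def by simp
      next
        case (Suc n)
        then have "zfib 12 dvd orb (Suc (v + n))" using ostep by blast
        then show ?case using z12 by simp
      qed
    qed
    fix t
    have "v * 1 \<le> v * p" using p by (intro mult_le_mono2) simp
    then have "t + v * p = v + (t + v * p - v)" by linarith
    then have "orb (t + v * p) = orb (v + (t + v * p - v))" by metis
    then have "12 dvd orb (t + v * p)" using all12 by simp
    then have d12: "12 dvd orb t" using oper by simp
    define d where "d = orb t div 12"
    have od: "orb t = 12 * d" using d12 d_def by simp
    have d0: "d > 0" using opos[of t] od by (cases d) auto
    have n2: "\<not> 2 dvd d"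
    proof
      assume "2 dvd d"
      then obtain k where "d = 2 * k" by blast
      then have "orb t = 8 * (3 * k)" using od by simp
      then have "8 dvd orb t" by (metis dvd_triv_left)
      then show False using n8[of t] by blast
    qed
    have n3: "\<not> 3 dvd d"
    proof
      assume "3 dvd d"
      then obtain k where "d = 3 * k" by blast
      then have "orb t = 9 * (4 * k)" using od by simp
      then have "9 dvd orb t" by (metis dvd_triv_left)
      then show False using n9[of t] by blast
    qed
    have d5: "\<forall>r. prime r \<longrightarrow> r dvd d \<longrightarrow> r = 5"
    proof (intro allI impI)
      fix r assume r: "prime r" "r dvd d"
      then have "r dvd orb t" using od by simp
      then have "r = 2 \<or> r = 3 \<or> r = 5" using small r by blast
      then show "r = 5" using r n2 n3 by blast
    qed
    have dF: "d dvd fib d" using G5 d0 d5 by blast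
    have "coprime 2 d" using n2 by (simp add: prime_imp_coprime)
    then have c4: "coprime 4 d" using coprime_power_left_iff[of 2 2 d] by simp
    have c3: "coprime 3 d" using n3 by (simp add: prime_imp_coprime)
    have cop: "coprime 12 d" using c4 c3 coprime_mult_left_iff[of 4 3 d] by simp
    have "144 dvd fib (12 * d)" using fib_dvd_fib[of 12 "12 * d"] fibs by simp
    then have "12 dvd fib (12 * d)" using dvd_trans[of "12::nat" 144] by simp
    moreover have "d dvd fib (12 * d)" using dF fib_dvd_fib[of d "12 * d"] dvd_trans by simp
    ultimately have "12 * d dvd fib (12 * d)" using cop by (simp add: divides_mult)
    then show "orb t dvd fib (orb t)" using od by simp
  next
    case False
    fix t
    have "\<forall>r. prime r \<longrightarrow> r dvd orb t \<longrightarrow> r = 5" using small False by blast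
    then show "orb t dvd fib (orb t)" using G5 opos by blast
  qed
  have desc: "\<And>t. orb (Suc t) dvd orb t"
  proof -
    fix t
    have "orb t dvd fib (orb t)" by (rule good)
    then have "zfib (orb t) dvd orb t" using z_dvd_iff[OF opos] by blast
    then show "orb (Suc t) dvd orb t" by (simp add: oS)
  qed
  have chain: "\<And>j. orb (Suc j) dvd orb 1"
  proof -
    fix j show "orb (Suc j) dvd orb 1"
    proof (induct j)
      case 0 then show ?case by simp
    next
      case (Suc j) then show ?case using desc[of "Suc j"] dvd_trans by blast
    qed
  qed
  obtain p' where p': "p = Suc p'" using p by (cases p) auto
  have "orb p = c" using cyc orb_def by simp
  then have "c dvd orb 1" using chain[of p'] p' by simp
  moreover have "orb 1 dvd c" using desc[of 0] orb_def by simp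
  ultimately have "orb 1 = c" by (simp add: dvd_antisym)
  then show ?thesis by (simp add: orb_def)
qed

lemma A_facts:
  assumes "n \<in> A_set k"
  shows "0 < n" "n = k * zfib n" "0 < zfib n" "zfib (zfib n) dvd zfib n"
proof -
  from assms have n: "0 < n" "zfib n dvd n" "n div zfib n = k" unfolding A_set_def by auto
  show "0 < n" by (rule n(1))
  show z0: "0 < zfib n" using z_spec[OF n(1)] by blast
  show nk: "n = k * zfib n" using n by (metis dvd_div_mult_self)
  show "zfib (zfib n) dvd zfib n" using z_mono[OF n(1) n(2)] .
qed

lemma orbit_dvd:
  assumes k: "0 < k" and n: "n \<in> A_set k"
  shows "(zfib ^^ Suc i) k dvd zfib n"
proof (induct i)
  case 0
  have "k dvd n" using A_facts(2)[OF n] by (metis dvd_triv_left)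
  then show ?case using z_mono[OF A_facts(1)[OF n]] by simp
next
  case (Suc i)
  then have "zfib ((zfib ^^ Suc i) k) dvd zfib (zfib n)" using z_mono[OF A_facts(3)[OF n]] by blast
  then show ?case using A_facts(4)[OF n] dvd_trans by simp
qed

theorem theorem2p2:
  fixes k :: nat
  assumes "0 < k" and "A_set k \<noteq> {}"
  shows "finite {(zfib ^^ i) k | i. 1 \<le> i}
         \<and> (\<exists>j\<ge>1. \<forall>i\<ge>j. (zfib ^^ i) k = (zfib ^^ j) k \<and> zfib ((zfib ^^ j) k) = (zfib ^^ j) k)
         \<and> c_min k = k * Lcm {(zfib ^^ i) k | i. 1 \<le> i}"
proof -
  have k: "0 < k" by (rule assms(1))
  obtain n where n: "n \<in> A_set k" using assms(2) by blast
  define m where "m = zfib n"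
  have m0: "0 < m" using A_facts(3)[OF n] m_def by simp
  define a where "a i = (zfib ^^ i) k" for i
  have aS: "\<And>i. a (Suc i) = zfib (a i)" by (simp add: a_def)
  have apos: "\<And>i. 0 < a i" using orb_pos[OF k] a_def by simp
  define T where "T = {(zfib ^^ i) k | i. 1 \<le> i}"
  have Tdef: "T = {a i | i. 1 \<le> i}" by (simp add: T_def a_def)
  have Tmem: "\<And>x. x \<in> T \<longleftrightarrow> (\<exists>i. x = a (Suc i))"
  proof -
    fix x
    show "x \<in> T \<longleftrightarrow> (\<exists>i. x = a (Suc i))"
    proof
      assume "x \<in> T"
      then obtain i where "x = a i" "1 \<le> i" unfolding Tdef by blast
      then have "x = a (Suc (i - 1))" by simp
      then show "\<exists>i. x = a (Suc i)" by blast
    next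
      assume "\<exists>i. x = a (Suc i)"
      then obtain i where "x = a (Suc i)" by blast
      moreover have "1 \<le> Suc i" by simp
      ultimately show "x \<in> T" unfolding Tdef by blast
    qed
  qed
  have adm: "\<And>i. a (Suc i) dvd m" using orbit_dvd[OF k n] a_def m_def by simp
  have "T \<subseteq> {d. d dvd m}" using Tmem adm by auto
  then have fT: "finite T" using finite_subset finite_divisors_nat[OF m0] by blast
  have fixpt: "\<exists>j\<ge>1. \<forall>i\<ge>j. a i = a j \<and> zfib (a j) = a j"
  proof -
    have le: "\<And>i. 1 \<le> i \<Longrightarrow> a i \<le> m"
    proof -
      fix i :: nat assume "1 \<le> i"
      then obtain i' where "i = Suc i'" by (cases i) auto
      then show "a i \<le> m" using adm[of i'] m0 dvd_imp_le by simp
    qed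
    have "a ` {1..m+1} \<subseteq> {1..m}" using le apos by (auto simp: Suc_le_eq)
    then have "card (a ` {1..m+1}) \<le> card {1..m}" by (intro card_mono) auto
    then have "\<not> inj_on a {1..m+1}" using card_image by fastforce
    then obtain i j where ij: "i \<in> {1..m+1}" "j \<in> {1..m+1}" "i \<noteq> j" "a i = a j"
      unfolding inj_on_def by blast
    then obtain i j where ij: "1 \<le> i" "i < j" "a i = a j"
      by (metis atLeastAtMost_iff linorder_neqE_nat)
    have e: "j - i + i = j" using ij by simp
    have "(zfib ^^ (j - i + i)) k = (zfib ^^ (j - i)) ((zfib ^^ i) k)"
      by (simp only: funpow_add[of "j - i" i zfib] o_apply)
    then have "(zfib ^^ (j - i)) (a i) = a j" unfolding a_def e by simp
    then have "(zfib ^^ (j - i)) (a i) = a i" using ij by simp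
    moreover have "0 < j - i" using ij by simp
    ultimately have fx: "zfib (a i) = a i" using cycle_fixed[OF apos] by blast
    have "\<And>d. a (i + d) = a i"
    proof -
      fix d show "a (i + d) = a i"
      proof (induct d)
        case 0 then show ?case by simp
      next
        case (Suc d)
        have "a (i + Suc d) = zfib (a (i + d))" using aS[of "i + d"] by simp
        then show ?case using Suc fx by simp
      qed
    qed
    then have "\<forall>l\<ge>i. a l = a i" by (metis le_add_diff_inverse)
    then show ?thesis using ij fx by blast
  qed
  define L where "L = Lcm T"
  have L0: "0 < L"
  proof -
    have "0 \<notin> T" using Tmem apos by (metis less_numeral_extra(3))
    then show ?thesis using Lcm_0_iff[OF fT] L_def by (simp add: gr0I)
  qed
  have aL: "\<And>i. a (Suc i) dvd L"
  proof -
    fix i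
    have "a (Suc i) \<in> T" using Tmem by blast
    then show "a (Suc i) dvd L" unfolding L_def by (rule dvd_Lcm)
  qed
  have LF: "L dvd fib L"
    unfolding L_def
  proof (rule Lcm_least)
    fix x assume "x \<in> T"
    then obtain i where x: "x = a (Suc i)" using Tmem by blast
    have "x dvd fib (zfib x)" using z_spec[OF apos] x by blast
    also have "fib (zfib x) dvd fib (Lcm T)" using x aS aL L_def fib_dvd_fib by metis
    finally show "x dvd fib (Lcm T)" .
  qed
  have kF: "k dvd fib L"
  proof -
    have "k dvd fib (zfib k)" using z_spec[OF k] by blast
    moreover have "zfib k dvd L" using aL[of 0] a_def by simp
    ultimately show ?thesis using fib_dvd_fib dvd_trans by blast
  qed
  have zLL: "zfib L dvd L" using z_dvd_iff[OF L0] LF by blast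
  have "L dvd m" unfolding L_def
  proof (rule Lcm_least)
    fix x assume "x \<in> T"
    then obtain i where "x = a (Suc i)" using Tmem by blast
    then show "x dvd m" using adm by simp
  qed
  then obtain D where mD: "m = L * D" by blast
  have D0: "0 < D" using mD m0 by (cases D) auto
  have nF: "k * m dvd fib m" using z_spec[OF A_facts(1)[OF n]] A_facts(2)[OF n] m_def by simp
  have kLF: "k * L dvd fib L"
  proof (rule multiplicity_le_imp_dvd)
    show "k * L \<noteq> 0" using k L0 by simp
  next
    fix r :: nat assume r: "prime r"
    define \<alpha> where "\<alpha> = multiplicity r (k * L)"
    show "multiplicity r (k * L) \<le> multiplicity r (fib L)"
    proof (cases "\<alpha> = 0")
      case True then show ?thesis using \<alpha>_def by simp
    next
      case False
      have ru: "\<not> is_unit r" using r not_prime_unit by blast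
      have kL0: "k * L \<noteq> 0" using k L0 by simp
      have rkL: "r dvd k * L" using False \<alpha>_def multiplicity_gt_zero_iff[OF kL0 ru] by simp
      have rF: "r dvd fib L"
      proof -
        have "r dvd k \<or> r dvd L" using rkL r prime_dvd_mult_iff by blast
        then show ?thesis using kF LF dvd_trans by blast
      qed
      have r2: "r \<noteq> 2 \<or> 4 dvd fib L"
      proof (cases "r = 2")
        case True
        have "3 dvd L"
        proof -
          have "2 dvd k \<or> 2 dvd L" using rkL True prime_dvd_mult_iff two_is_prime_nat by blast
          then show ?thesis
          proof
            assume "2 dvd k"
            then have "zfib 2 dvd zfib k" using z_mono[OF k] by blast
            then show ?thesis using z2 aL[of 0] a_def dvd_trans by simp
          next
            assume "2 dvd L"
            then have "zfib 2 dvd zfib L" using z_mono[OF L0] by blast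
            then show ?thesis using z2 zLL dvd_trans by simp
          qed
        qed
        then have "zfib 3 dvd zfib L" using z_mono[OF L0] by blast
        then have "4 dvd L" using z3 zLL dvd_trans by simp
        moreover have "coprime (3::nat) 4"
        proof -
          have "prime (3::nat)" by simp
          moreover have "\<not> (3::nat) dvd 4" by simp
          ultimately show ?thesis by (rule prime_imp_coprime)
        qed
        ultimately have "3 * 4 dvd L" using \<open>3 dvd L\<close> by (intro divides_mult)
        then have "fib 12 dvd fib L" using fib_dvd_fib by simp
        then have "144 dvd fib L" using fibs by simp
        then show ?thesis using dvd_trans[of "4::nat" 144] by simp
      qed simp
      have Dn: "D \<noteq> 0" using D0 by simp
      define \<delta> where "\<delta> = multiplicity r D"
      obtain t where Dt: "D = r ^ \<delta> * t" and rt: "\<not> r dvd t"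
        using multiplicity_decompose'[OF Dn ru] \<delta>_def by blast
      have "r ^ \<alpha> dvd k * L" using \<alpha>_def by (simp add: multiplicity_dvd)
      then have "r ^ \<alpha> * r ^ \<delta> dvd (k * L) * (r ^ \<delta> * t)" by (intro mult_dvd_mono) simp_all
      then have "r ^ (\<alpha> + \<delta>) dvd k * m" using mD Dt by (simp add: power_add algebra_simps)
      then have "r ^ (\<alpha> + \<delta>) dvd fib (L * r ^ \<delta> * t)" using nF mD Dt dvd_trans by (simp add: algebra_simps)
      then have "r ^ \<alpha> dvd fib L" using Desc[OF r rt L0 rF r2] by blast
      moreover have "fib L \<noteq> 0" using L0 fib_neq_0_nat by simp
      ultimately show ?thesis using power_dvd_iff_le_multiplicity[of "fib L" r \<alpha>] ru \<alpha>_def by simp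
    qed
  qed
  have kL0: "0 < k * L" using k L0 by simp
  have z1': "zfib (k * L) dvd L" using z_dvd_iff[OF kL0] kLF by blast
  have "Lcm T dvd zfib (k * L)"
  proof (rule Lcm_least)
    fix x assume "x \<in> T"
    then obtain i where x: "x = a (Suc i)" using Tmem by blast
    show "x dvd zfib (k * L)"
    proof (cases i)
      case 0
      then show ?thesis using x a_def z_mono[OF kL0, of k] by simp
    next
      case (Suc i')
      have "a (Suc i') dvd k * L" using aL[of i'] by simp
      then have "zfib (a (Suc i')) dvd zfib (k * L)" using z_mono[OF kL0] by blast
      then show ?thesis using x Suc aS by simp
    qed
  qed
  then have z2': "L dvd zfib (k * L)" by (simp add: L_def)
  have zkL: "zfib (k * L) = L" using z1' z2' L_def by (simp add: dvd_antisym)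
  have inA: "k * L \<in> A_set k" unfolding A_set_def using kL0 zkL L0 by simp
  have minA: "\<And>n'. n' \<in> A_set k \<Longrightarrow> k * L \<le> n'"
  proof -
    fix n' assume n': "n' \<in> A_set k"
    have "L dvd zfib n'" unfolding L_def
    proof (rule Lcm_least)
      fix x assume "x \<in> T"
      then obtain i where "x = a (Suc i)" using Tmem by blast
      then show "x dvd zfib n'" using orbit_dvd[OF k n'] a_def by simp
    qed
    then have "L \<le> zfib n'" using A_facts(3)[OF n'] dvd_imp_le by blast
    then show "k * L \<le> n'" using A_facts(2)[OF n'] by (metis mult_le_mono2)
  qed
  have "c_min k = k * L" unfolding c_min_def by (rule Least_equality) (use inA minA in auto)
  then show ?thesis using fT fixpt unfolding T_def L_def a_def by blast
qed

end
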